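(* Let $\Gamma$ be a quantum graph with $N$ finite edges of the lengths $l_i$, $M$ infinite (semi-infinite) edges, and the coupling described by the unitary matrix $U = \left(\begin{array}{cc}U_1 &U_2 \\ U_3 & U_4 \end{array}\right)$, where $U_4$ corresponds to the coupling between the infinite edges. Let $k_0$ satisfy $\mathrm{det}\,[(1-k_0)U_4 - (1+k_0) I]\not = 0$ and let $k_0$ be a pole of the resolvent $(H - \lambda \,\mathrm{id})^{-1}$ of multiplicity $d$. Let $\Gamma_\varepsilon$ be a geometrically perturbed quantum graph with the edges of lengths $l_i(1+\varepsilon_i)$ and the same coupling as $\Gamma$, where $\vec\varepsilon=(\varepsilon_1,\dots,\varepsilon_N)$. Then there exists an $\varepsilon_0 >0$ such that for all $\vec\varepsilon$ in the open ball of radius $\varepsilon_0$ centred at $0$ the sum of multiplicities of the resolvent poles of $\Gamma_\varepsilon$ in a sufficiently small neighbourhood of $k_0$ is $d$.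
   Context: The Hamiltonian $H$ acts as $-\mathrm{d}^2/\mathrm{d}x^2$ on each edge of the graph, with domain consisting of $W^{2,2}$ functions satisfying the vertex coupling conditions $(U-I)\Psi+i(U+I)\Psi'=0$, where $\Psi,\Psi'$ are the vectors of boundary values and outward derivatives at all edge ends (all vertices merged into a single vertex with the block-diagonal coupling matrix $U$ encoding the graph topology); $U_1$ is the $2N\times 2N$ block referring to the ends of the finite edges, $U_4$ the $M\times M$ block referring to the infinite edges, $U_2,U_3$ the connecting blocks. Resolvent poles (resonances, in the lower complex half-plane of the momentum variable $k$, with energy $k^2$, obtained by analytic continuation / exterior complex scaling; they coincide with poles of the scattering matrix) are the solutions $k$ of $\mathrm{det}\,[(U-I)C_1(k)+ik(U+I)C_2(k)]=0$, where $C_1(k)=\mathrm{diag}(C_1^{(1)}(k),\dots,C_1^{(N)}(k),I_{M\times M})$, $C_2(k)=\mathrm{diag}(C_2^{(1)}(k),\dots,C_2^{(N)}(k),iI_{M\times M})$, $C_1^{(j)}(k)=\begin{pmatrix}0&1\\ \sin kl_j&\cos kl_j\end{pmatrix}$, $C_2^{(j)}(k)=\begin{pmatrix}1&0\\ -\cos kl_j&\sin kl_j\end{pmatrix}$. Equivalently, eliminating the external edges gives the effective energy-dependent coupling $\tilde U(k)=U_1-(1-k)U_2[(1-k)U_4-(k+1)I]^{-1}U_3$ on the compact part, which is defined when $(1-k)U_4-(k+1)I$ is regular. The multiplicity of a pole is its multiplicity as a zero in $k$ of this determinant, regarded as a function $F(k,\vec\varepsilon)$ holomorphic in $k$ and continuous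 in the length perturbation $\vec\varepsilon$. *)

theory Defs
  imports "HOL-Complex_Analysis.Complex_Analysis" "Jordan_Normal_Form.Determinant"
begin

definition cadjoint :: "complex mat \<Rightarrow> complex mat" where
  "cadjoint A = mat (dim_col A) (dim_row A) (\<lambda>(i,j). cnj (A $$ (j,i)))"

definition unitary_cmat :: "nat \<Rightarrow> complex mat \<Rightarrow> bool" where
  "unitary_cmat n U \<longleftrightarrow> U \<in> carrier_mat n n \<and> U * cadjoint U = 1\<^sub>m n"

text \<open>Block U_4 of U: the lower right M x M block (infinite edges), where
  the first 2N indices refer to the ends of the finite edges.\<close>
definition block_U4 :: "nat \<Rightarrow> nat \<Rightarrow> complex mat \<Rightarrow> complex mat" where
  "block_U4 N M U = mat M M (\<lambda>(i,j). U $$ (2*N + i, 2*N + j))"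

text \<open>C_1(k) and C_2(k): block diagonal (2N+M) x (2N+M) matrices built from the
  edge lengths L j (j < N); index 2j and 2j+1 are the two ends of edge j.\<close>
definition C1_mat :: "nat \<Rightarrow> nat \<Rightarrow> (nat \<Rightarrow> real) \<Rightarrow> complex \<Rightarrow> complex mat" where
  "C1_mat N M L k = mat (2*N+M) (2*N+M) (\<lambda>(i,j).
     if i < 2*N \<and> j < 2*N \<and> i div 2 = j div 2 then
       (let e = i div 2; s = sin (k * of_real (L e)); c = cos (k * of_real (L e)) in
        if i mod 2 = 0 then (if j mod 2 = 0 then 0 else 1)
        else (if j mod 2 = 0 then s else c))
     else if 2*N \<le> i \<and> i = j then 1 else 0)"

definition C2_mat :: "nat \<Rightarrow> nat \<Rightarrow> (nat \<Rightarrow> real) \<Rightarrow> complex \<Rightarrow> complex mat" where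
  "C2_mat N M L k = mat (2*N+M) (2*N+M) (\<lambda>(i,j).
     if i < 2*N \<and> j < 2*N \<and> i div 2 = j div 2 then
       (let e = i div 2; s = sin (k * of_real (L e)); c = cos (k * of_real (L e)) in
        if i mod 2 = 0 then (if j mod 2 = 0 then 1 else 0)
        else (if j mod 2 = 0 then - c else s))
     else if 2*N \<le> i \<and> i = j then \<i> else 0)"

text \<open>The resonance determinant det[(U-I)C_1(k) + ik(U+I)C_2(k)]; its zeros in k
  are the resolvent poles.\<close>
definition res_det :: "nat \<Rightarrow> nat \<Rightarrow> complex mat \<Rightarrow> (nat \<Rightarrow> real) \<Rightarrow> complex \<Rightarrow> complex" where
  "res_det N M U L k =
     det ((U - 1\<^sub>m (2*N+M)) * C1_mat N M L k
          + (\<i> * k) \<cdot>\<^sub>m ((U + 1\<^sub>m (2*N+M)) * C2_mat N M L k))"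

definition perturbed_lengths :: "(nat \<Rightarrow> real) \<Rightarrow> (nat \<Rightarrow> real) \<Rightarrow> nat \<Rightarrow> real" where
  "perturbed_lengths l eps j = l j * (1 + eps j)"

definition zero_of_mult :: "(complex \<Rightarrow> complex) \<Rightarrow> complex \<Rightarrow> nat \<Rightarrow> bool" where
  "zero_of_mult f z d \<longleftrightarrow> f z = 0 \<and> (\<forall>\<^sub>F w in at z. f w \<noteq> 0) \<and> zorder f z = int d"

definition eps_norm :: "nat \<Rightarrow> (nat \<Rightarrow> real) \<Rightarrow> real" where
  "eps_norm N eps = sqrt (\<Sum>j<N. (eps j)\<^sup>2)"

end

theory Submission
  imports Defs
begin

lemma tendsto_If_const:
  "(P \<Longrightarrow> (f \<longlongrightarrow> a) F) \<Longrightarrow> (\<not>P \<Longrightarrow> (g \<longlongrightarrow> b) F) \<Longrightarrow>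
   ((\<lambda>x. if P then f x else g x) \<longlongrightarrow> (if P then a else b)) F"
  by (cases P) auto

lemma holomorphic_If_const:
  "(P \<Longrightarrow> f holomorphic_on S) \<Longrightarrow> (\<not>P \<Longrightarrow> g holomorphic_on S) \<Longrightarrow>
   (\<lambda>x. if P then f x else g x) holomorphic_on S"
  by (cases P) auto

lemma tendsto_csin[tendsto_intros]: "(f \<longlongrightarrow> a) F \<Longrightarrow> ((\<lambda>x. sin (f x :: complex)) \<longlongrightarrow> sin a) F"
  by (rule isCont_tendsto_compose[OF isCont_sin])
lemma tendsto_ccos[tendsto_intros]: "(f \<longlongrightarrow> a) F \<Longrightarrow> ((\<lambda>x. cos (f x :: complex)) \<longlongrightarrow> cos a) F"
  by (rule isCont_tendsto_compose[OF isCont_cos])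

lemma det_tendsto:
  fixes A :: "'b \<Rightarrow> complex mat"
  assumes "\<And>x. A x \<in> carrier_mat n n" "B \<in> carrier_mat n n"
    "\<And>i j. i < n \<Longrightarrow> j < n \<Longrightarrow> ((\<lambda>x. A x $$ (i,j)) \<longlongrightarrow> B $$ (i,j)) F"
  shows "((\<lambda>x. det (A x)) \<longlongrightarrow> det B) F"
proof -
  have e: "(\<lambda>x. det (A x)) = (\<lambda>x. \<Sum>p\<in>{p. p permutes {0..<n}}. signof p * (\<Prod>i=0..<n. A x $$ (i, p i)))"
    using det_def'[OF assms(1)] by auto
  show ?thesis unfolding e det_def'[OF assms(2)]
    apply (rule tendsto_sum)
    apply (rule tendsto_mult[OF tendsto_const])
    apply (rule tendsto_prod)
    apply (rule assms(3))
    by (auto simp: permutes_def)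
qed

lemma det_holo:
  fixes A :: "complex \<Rightarrow> complex mat"
  assumes "\<And>x. A x \<in> carrier_mat n n"
    "\<And>i j. i < n \<Longrightarrow> j < n \<Longrightarrow> (\<lambda>x. A x $$ (i,j)) holomorphic_on S"
  shows "(\<lambda>x. det (A x)) holomorphic_on S"
proof -
  have e: "(\<lambda>x. det (A x)) = (\<lambda>x. \<Sum>p\<in>{p. p permutes {0..<n}}. signof p * (\<Prod>i=0..<n. A x $$ (i, p i)))"
    using det_def'[OF assms(1)] by auto
  show ?thesis unfolding e
    apply (rule holomorphic_on_sum)
    apply (rule holomorphic_on_mult[OF holomorphic_on_const])
    apply (rule holomorphic_on_prod)
    apply (rule assms(2))
    by (auto simp: permutes_def)
qed

lemma mult_entry:
  assumes "A \<in> carrier_mat n n" "B \<in> carrier_mat n n" "i < n" "j < n"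
  shows "(A * B) $$ (i,j) = (\<Sum>m<n. A $$ (i,m) * B $$ (m,j))"
  using assms by (auto simp: scalar_prod_def lessThan_atLeast0 intro!: sum.cong)

lemma C1_carrier: "C1_mat N M L k \<in> carrier_mat (2*N+M) (2*N+M)"
  unfolding C1_mat_def by (rule mat_carrier)
lemma C2_carrier: "C2_mat N M L k \<in> carrier_mat (2*N+M) (2*N+M)"
  unfolding C2_mat_def by (rule mat_carrier)
lemma div2_less: "j < 2*N \<Longrightarrow> j div 2 < (N::nat)" by linarith

lemma C1_tendsto:
  assumes "\<And>j. j < N \<Longrightarrow> ((\<lambda>x. Lf x j) \<longlongrightarrow> L j) F" "(kf \<longlongrightarrow> k) F" "m < 2*N+M" "j < 2*N+M"
  shows "((\<lambda>x. C1_mat N M (Lf x) (kf x) $$ (m,j)) \<longlongrightarrow> C1_mat N M L k $$ (m,j)) F"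
  using assms(3,4) unfolding C1_mat_def Let_def
  by (auto intro!: tendsto_intros tendsto_If_const assms(1,2) div2_less)

lemma C2_tendsto:
  assumes "\<And>j. j < N \<Longrightarrow> ((\<lambda>x. Lf x j) \<longlongrightarrow> L j) F" "(kf \<longlongrightarrow> k) F" "m < 2*N+M" "j < 2*N+M"
  shows "((\<lambda>x. C2_mat N M (Lf x) (kf x) $$ (m,j)) \<longlongrightarrow> C2_mat N M L k $$ (m,j)) F"
  using assms(3,4) unfolding C2_mat_def Let_def
  by (auto intro!: tendsto_intros tendsto_If_const assms(1,2) div2_less)

lemma C1_holo:
  assumes "m < 2*N+M" "j < 2*N+M"
  shows "(\<lambda>k. C1_mat N M L k $$ (m,j)) holomorphic_on S"
  using assms unfolding C1_mat_def Let_def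
  by (auto intro!: holomorphic_intros holomorphic_If_const)

lemma C2_holo:
  assumes "m < 2*N+M" "j < 2*N+M"
  shows "(\<lambda>k. C2_mat N M L k $$ (m,j)) holomorphic_on S"
  using assms unfolding C2_mat_def Let_def
  by (auto intro!: holomorphic_intros holomorphic_If_const)

definition bigM where "bigM N M U L k = (U - 1\<^sub>m (2*N+M)) * C1_mat N M L k
          + (\<i> * k) \<cdot>\<^sub>m ((U + 1\<^sub>m (2*N+M)) * C2_mat N M L k)"

lemma bigM_carrier: "U \<in> carrier_mat (2*N+M) (2*N+M) \<Longrightarrow> bigM N M U L k \<in> carrier_mat (2*N+M) (2*N+M)"
  unfolding bigM_def
  using C1_carrier[of N M L k] C2_carrier[of N M L k]
  by (intro add_carrier_mat mult_carrier_mat smult_carrier_mat minus_carrier_mat one_carrier_mat) auto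

lemma bigM_entry:
  assumes "U \<in> carrier_mat (2*N+M) (2*N+M)" "i < 2*N+M" "j < 2*N+M"
  shows "bigM N M U L k $$ (i,j) =
     (\<Sum>m<2*N+M. (U - 1\<^sub>m (2*N+M)) $$ (i,m) * C1_mat N M L k $$ (m,j))
     + \<i> * k * (\<Sum>m<2*N+M. (U + 1\<^sub>m (2*N+M)) $$ (i,m) * C2_mat N M L k $$ (m,j))"
proof -
  have c: "U - 1\<^sub>m (2*N+M) \<in> carrier_mat (2*N+M) (2*N+M)" "U + 1\<^sub>m (2*N+M) \<in> carrier_mat (2*N+M) (2*N+M)"
    using assms by auto
  have c2: "(U - 1\<^sub>m (2*N+M)) * C1_mat N M L k \<in> carrier_mat (2*N+M) (2*N+M)"
    "(\<i> * k) \<cdot>\<^sub>m ((U + 1\<^sub>m (2*N+M)) * C2_mat N M L k) \<in> carrier_mat (2*N+M) (2*N+M)"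
    "(U + 1\<^sub>m (2*N+M)) * C2_mat N M L k \<in> carrier_mat (2*N+M) (2*N+M)"
    using c C1_carrier C2_carrier by (auto intro!: mult_carrier_mat smult_carrier_mat)
  show ?thesis unfolding bigM_def
    apply (subst index_add_mat(1))
    using c2 assms apply auto[2]
    apply (subst index_smult_mat(1))
    using c2 assms apply auto[2]
    apply (subst mult_entry[OF c(1) C1_carrier assms(2,3)])
    apply (subst mult_entry[OF c(2) C2_carrier assms(2,3)])
    by simp
qed

lemma res_det_tendsto:
  assumes U: "U \<in> carrier_mat (2*N+M) (2*N+M)"
    and "\<And>j. j < N \<Longrightarrow> ((\<lambda>x. Lf x j) \<longlongrightarrow> L j) F" "(kf \<longlongrightarrow> k) F"
  shows "((\<lambda>x. res_det N M U (Lf x) (kf x)) \<longlongrightarrow> res_det N M U L k) F"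
proof -
  have r: "res_det N M U L' k' = det (bigM N M U L' k')" for L' k'
    by (simp add: res_det_def bigM_def)
  show ?thesis unfolding r
    apply (rule det_tendsto[OF bigM_carrier[OF U] bigM_carrier[OF U]])
    apply (simp add: bigM_entry[OF U])
    by (auto intro!: tendsto_intros C1_tendsto C2_tendsto assms(2,3))
qed

lemma res_det_holo:
  assumes U: "U \<in> carrier_mat (2*N+M) (2*N+M)"
  shows "res_det N M U L holomorphic_on S"
proof -
  have r: "res_det N M U L = (\<lambda>k. det (bigM N M U L k))"
    by (simp add: res_det_def bigM_def fun_eq_iff)
  show ?thesis unfolding r
    apply (rule det_holo[OF bigM_carrier[OF U]])
    apply (simp add: bigM_entry[OF U])
    by (auto intro!: holomorphic_intros C1_holo C2_holo)
qed

lemma eps_comp_le: "j < N \<Longrightarrow> \<bar>eps j\<bar> \<le> eps_norm N eps"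
proof -
  assume j: "j < N"
  have "(eps j)\<^sup>2 \<le> (\<Sum>i<N. (eps i)\<^sup>2)"
    using j by (intro member_le_sum) auto
  hence "sqrt ((eps j)\<^sup>2) \<le> eps_norm N eps"
    unfolding eps_norm_def by (rule real_sqrt_le_mono)
  thus ?thesis by simp
qed

lemma uniform_close:
  assumes U: "U \<in> carrier_mat (2*N+M) (2*N+M)" and r: "r > 0" and m: "m > 0"
  shows "\<exists>e0>0. \<forall>eps. eps_norm N eps < e0 \<longrightarrow> (\<forall>w\<in>sphere k0 r.
           norm (res_det N M U (perturbed_lengths l eps) w - res_det N M U l w) < m)"
proof (rule ccontr)
  assume "\<not> ?thesis"
  hence "\<forall>n::nat. \<exists>eps w. eps_norm N eps < inverse (real (Suc n)) \<and> w \<in> sphere k0 r \<and>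
      \<not> norm (res_det N M U (perturbed_lengths l eps) w - res_det N M U l w) < m"
    by (metis inverse_positive_iff_positive of_nat_0_less_iff zero_less_Suc)
  then obtain E W where EW: "\<And>n. eps_norm N (E n) < inverse (real (Suc n))" "\<And>n. W n \<in> sphere k0 r"
     "\<And>n. \<not> norm (res_det N M U (perturbed_lengths l (E n)) (W n) - res_det N M U l (W n)) < m"
    by metis
  have "seq_compact (sphere k0 r)" by (simp add: compact_imp_seq_compact)
  then obtain w\<sigma> \<sigma> where ws: "w\<sigma> \<in> sphere k0 r" "strict_mono \<sigma>" "(W \<circ> \<sigma>) \<longlonglongrightarrow> w\<sigma>"
    using EW(2) unfolding seq_compact_def by metis
  have Ej: "(\<lambda>n. E (\<sigma> n) j) \<longlonglongrightarrow> 0" if j: "j < N" for j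
  proof (rule Lim_null_comparison)
    show "\<forall>\<^sub>F n in sequentially. norm (E (\<sigma> n) j) \<le> inverse (real (Suc n))"
    proof (intro always_eventually allI)
      fix n
      have "norm (E (\<sigma> n) j) \<le> eps_norm N (E (\<sigma> n))" using eps_comp_le[OF j] by simp
      also have "\<dots> \<le> inverse (real (Suc (\<sigma> n)))" using EW(1)[of "\<sigma> n"] by simp
      also have "\<dots> \<le> inverse (real (Suc n))"
        using seq_suble[OF ws(2), of n] by (simp add: le_imp_inverse_le)
      finally show "norm (E (\<sigma> n) j) \<le> inverse (real (Suc n))" .
    qed
    show "(\<lambda>n. inverse (real (Suc n))) \<longlonglongrightarrow> 0" by (rule LIMSEQ_inverse_real_of_nat)
  qed
  have L1: "(\<lambda>n. res_det N M U (perturbed_lengths l (E (\<sigma> n))) ((W \<circ> \<sigma>) n)) \<longlonglongrightarrow> res_det N M U l w\<sigma>"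
  proof (rule res_det_tendsto[OF U _ ws(3)])
    fix j assume j: "j < N"
    have "(\<lambda>n. l j * (1 + E (\<sigma> n) j)) \<longlonglongrightarrow> l j * (1 + 0)"
      by (intro tendsto_intros Ej j)
    thus "(\<lambda>n. perturbed_lengths l (E (\<sigma> n)) j) \<longlonglongrightarrow> l j"
      by (simp add: perturbed_lengths_def)
  qed
  have L2: "(\<lambda>n. res_det N M U l ((W \<circ> \<sigma>) n)) \<longlonglongrightarrow> res_det N M U l w\<sigma>"
    by (rule res_det_tendsto[OF U _ ws(3)]) auto
  have "(\<lambda>n. norm (res_det N M U (perturbed_lengths l (E (\<sigma> n))) ((W \<circ> \<sigma>) n) - res_det N M U l ((W \<circ> \<sigma>) n))) \<longlonglongrightarrow> norm (res_det N M U l w\<sigma> - res_det N M U l w\<sigma>)"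
    by (intro tendsto_intros L1 L2)
  hence "\<forall>\<^sub>F n in sequentially. norm (res_det N M U (perturbed_lengths l (E (\<sigma> n))) ((W \<circ> \<sigma>) n) - res_det N M U l ((W \<circ> \<sigma>) n)) < m"
    using m by (intro order_tendstoD(2)) auto
  then obtain n where "norm (res_det N M U (perturbed_lengths l (E (\<sigma> n))) ((W \<circ> \<sigma>) n) - res_det N M U l ((W \<circ> \<sigma>) n)) < m"
    by (meson eventually_sequentially order.refl)
  with EW(3)[of "\<sigma> n"] show False by simp
qed

lemma zeros_nonneg_order:
  assumes holo: "G holomorphic_on UNIV" and fin: "finite {z\<in>cball k0 r1. G z = 0}"
    and p: "p \<in> ball k0 r1"
  shows "zorder G p \<ge> 0"
proof (rule zorder_ge_0)
  show "G analytic_on {p}" using holo analytic_on_holomorphic by blast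
  obtain d where d: "d > 0" "\<forall>x\<in>{z\<in>cball k0 r1. G z = 0}. x \<noteq> p \<longrightarrow> d \<le> dist p x"
    using finite_set_avoid[OF fin] by blast
  define \<delta> where "\<delta> = min d (r1 - dist k0 p)"
  have \<delta>: "0 < \<delta>" using d p by (simp add: dist_commute \<delta>_def)
  have H: "G w \<noteq> 0" if w: "w \<noteq> p" "dist w p < \<delta>" for w
  proof -
    have "w \<in> cball k0 r1" using w dist_triangle[of k0 w p] by (simp add: dist_commute \<delta>_def)
    with d w show "G w \<noteq> 0" by (auto simp: dist_commute \<delta>_def)
  qed
  have "\<forall>\<^sub>F w in at p. G w \<noteq> 0"
    unfolding eventually_at using \<delta> H by blast
  thus "\<exists>\<^sub>F w in at p. G w \<noteq> 0"
    by (simp add: eventually_frequently)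
qed

theorem theorem5:
  fixes N M :: nat and l :: "nat \<Rightarrow> real" and U :: "complex mat"
    and k0 :: complex and d :: nat
  assumes lpos: "\<And>j. j < N \<Longrightarrow> l j > 0"
    and unitary: "unitary_cmat (2*N+M) U"
    and regular: "det ((1 - k0) \<cdot>\<^sub>m block_U4 N M U - (1 + k0) \<cdot>\<^sub>m 1\<^sub>m M) \<noteq> 0"
    and pole: "zero_of_mult (res_det N M U l) k0 d"
  shows "\<exists>r0>0. \<forall>r. 0 < r \<and> r < r0 \<longrightarrow>
           (\<exists>\<epsilon>0>0. \<forall>eps :: nat \<Rightarrow> real. eps_norm N eps < \<epsilon>0 \<longrightarrow>
              (let F = res_det N M U (perturbed_lengths l eps);
                   Z = {k \<in> ball k0 r. F k = 0}
               in finite Z \<and> (\<Sum>k\<in>Z. nat (zorder F k)) = d))"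
proof -
  have U: "U \<in> carrier_mat (2*N+M) (2*N+M)" using unitary unfolding unitary_cmat_def by blast
  define F0 where "F0 = res_det N M U l"
  have holo0: "F0 holomorphic_on UNIV" unfolding F0_def by (rule res_det_holo[OF U])
  have F0k0: "F0 k0 = 0" and ev: "\<forall>\<^sub>F w in at k0. F0 w \<noteq> 0" and zo: "zorder F0 k0 = int d"
    using pole unfolding zero_of_mult_def F0_def by auto
  obtain r0 where r0: "r0 > 0" "\<And>w. w \<noteq> k0 \<Longrightarrow> dist w k0 < r0 \<Longrightarrow> F0 w \<noteq> 0"
    using ev unfolding eventually_at by blast
  show ?thesis
  proof (rule exI[of _ r0], rule conjI[OF r0(1)], intro allI impI)
    fix r assume r: "0 < r \<and> r < r0"
    have sph: "F0 w \<noteq> 0" if "w \<in> sphere k0 r" for w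
      using that r r0(2)[of w] by (auto simp: dist_commute)
    have "continuous_on (sphere k0 r) (\<lambda>w. norm (F0 w))"
      using holo0 by (intro continuous_intros) (auto intro: holomorphic_on_imp_continuous_on continuous_on_subset)
    moreover have "sphere k0 r \<noteq> {}" using r by simp
    ultimately obtain wm where wm: "wm \<in> sphere k0 r" "\<And>w. w \<in> sphere k0 r \<Longrightarrow> norm (F0 wm) \<le> norm (F0 w)"
      using continuous_attains_inf[of "sphere k0 r" "\<lambda>w. norm (F0 w)"] by auto
    define m where "m = norm (F0 wm)"
    have m: "m > 0" using sph[OF wm(1)] unfolding m_def by simp
    obtain e0 where e0: "e0 > 0" "\<And>eps. eps_norm N eps < e0 \<Longrightarrow> \<forall>w\<in>sphere k0 r.
           norm (res_det N M U (perturbed_lengths l eps) w - F0 w) < m"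
      using uniform_close[OF U _ m, of r k0 l] r unfolding F0_def by blast
    show "\<exists>\<epsilon>0>0. \<forall>eps :: nat \<Rightarrow> real. eps_norm N eps < \<epsilon>0 \<longrightarrow>
              (let F = res_det N M U (perturbed_lengths l eps);
                   Z = {k \<in> ball k0 r. F k = 0}
               in finite Z \<and> (\<Sum>k\<in>Z. nat (zorder F k)) = d)"
    proof (intro exI[of _ e0] conjI allI impI e0(1))
      fix eps :: "nat \<Rightarrow> real" assume eps: "eps_norm N eps < e0"
      define G where "G = res_det N M U (perturbed_lengths l eps)"
      have holoG: "G holomorphic_on UNIV" unfolding G_def by (rule res_det_holo[OF U])
      have close: "norm (G w - F0 w) < norm (F0 w)" if "w \<in> sphere k0 r" for w
        using e0(2)[OF eps] that wm(2)[OF that] unfolding G_def m_def by force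
      have Gsph: "G w \<noteq> 0" if "w \<in> sphere k0 r" for w
        using close[OF that] by auto
      define r1 where "r1 = (r + r0) / 2"
      have r1: "r < r1" "r1 < r0" using r unfolding r1_def by auto
      define s where "s = ball k0 r1"
      have finG: "finite {z\<in>cball k0 r1. G z = 0}"
      proof (cases "G constant_on UNIV")
        case True
        then obtain c where c: "\<And>z. G z = c" unfolding constant_on_def by blast
        have "k0 + r \<in> sphere k0 r" using r by (simp add: dist_norm)
        hence "c \<noteq> 0" using Gsph c by metis
        thus ?thesis using c by simp
      next
        case False
        show ?thesis
          by (rule holomorphic_compact_finite_zeros[OF holoG open_UNIV connected_UNIV compact_cball _ False]) auto
      qed
      have zG_fin: "finite {p\<in>s. G p = 0}"
        by (rule finite_subset[OF _ finG]) (auto simp: s_def)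
      have zF: "{p\<in>s. F0 p = 0} = {k0}"
        using r0(2) r1 F0k0 r by (auto simp: s_def dist_commute) (meson less_trans r0(2))
      have rou: "(\<Sum>p\<in>{p\<in>s. F0 p + (G p - F0 p) = 0}. winding_number (circlepath k0 r) p * zorder (\<lambda>p. F0 p + (G p - F0 p)) p)
          = (\<Sum>p\<in>{p\<in>s. F0 p = 0}. winding_number (circlepath k0 r) p * zorder F0 p)"
      proof (rule Rouche_theorem)
        show "open s" "connected s" unfolding s_def by auto
        show "finite {p\<in>s. F0 p + (G p - F0 p) = 0}" using zG_fin by simp
        show "finite {p\<in>s. F0 p = 0}" using zF by simp
        show "F0 holomorphic_on s" using holo0 by (rule holomorphic_on_subset) auto
        show "(\<lambda>p. G p - F0 p) holomorphic_on s"
          using holomorphic_on_subset[OF holo0] holomorphic_on_subset[OF holoG] by (intro holomorphic_intros) auto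
        show "valid_path (circlepath k0 r)" by simp
        show "pathfinish (circlepath k0 r) = pathstart (circlepath k0 r)" by simp
        show "path_image (circlepath k0 r) \<subseteq> s"
          using r r1 by (auto simp: s_def path_image_circlepath_nonneg)
        show "\<forall>z\<in>path_image (circlepath k0 r). cmod (G z - F0 z) < cmod (F0 z)"
          using r close by (simp add: path_image_circlepath_nonneg)
        show "\<forall>z. z \<notin> s \<longrightarrow> winding_number (circlepath k0 r) z = 0"
        proof (intro allI impI)
          fix z assume "z \<notin> s"
          hence "z \<notin> cball k0 r" using r1 by (auto simp: s_def)
          thus "winding_number (circlepath k0 r) z = 0"
            using r by (intro winding_number_zero_outside[of _ "cball k0 r"])
              (auto simp: path_image_circlepath_nonneg)
        qed
      qed
      have eqG: "(\<lambda>p. F0 p + (G p - F0 p)) = G" by auto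
      define Z where "Z = {k \<in> ball k0 r. G k = 0}"
      have ZS: "Z \<subseteq> {p\<in>s. G p = 0}" using r1 by (auto simp: Z_def s_def)
      have finZ: "finite Z" using finite_subset[OF ZS zG_fin] .
      have A: "(\<Sum>p\<in>{p\<in>s. G p = 0}. winding_number (circlepath k0 r) p * zorder G p)
            = (\<Sum>p\<in>Z. of_int (zorder G p))"
      proof (rule sum.mono_neutral_cong_right[OF zG_fin ZS])
        show "\<forall>i\<in>{p \<in> s. G p = 0} - Z. winding_number (circlepath k0 r) i * of_int (zorder G i) = 0"
        proof
          fix i assume i: "i \<in> {p \<in> s. G p = 0} - Z"
          hence "i \<notin> sphere k0 r" using Gsph by auto
          with i have "i \<notin> cball k0 r" by (auto simp: Z_def)
          hence "winding_number (circlepath k0 r) i = 0"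
            using r by (intro winding_number_zero_outside[of _ "cball k0 r"])
              (auto simp: path_image_circlepath_nonneg)
          thus "winding_number (circlepath k0 r) i * of_int (zorder G i) = 0" by simp
        qed
        fix x assume "x \<in> Z"
        hence "winding_number (circlepath k0 r) x = 1"
          by (intro winding_number_circlepath) (auto simp: Z_def dist_norm norm_minus_commute)
        thus "winding_number (circlepath k0 r) x * of_int (zorder G x) = of_int (zorder G x)" by simp
      qed
      have B: "(\<Sum>p\<in>{p\<in>s. G p = 0}. winding_number (circlepath k0 r) p * zorder G p) = of_int (int d)"
        using rou unfolding eqG zF using r by (simp add: zo winding_number_circlepath_centre)
      from A B have "(\<Sum>p\<in>Z. of_int (zorder G p) :: complex) = of_int (int d)" by simp
      hence S1: "(\<Sum>p\<in>Z. zorder G p) = int d"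
        by (metis (mono_tags) of_int_eq_iff of_int_sum)
      have nn: "zorder G p \<ge> 0" if "p \<in> Z" for p
        using zeros_nonneg_order[OF holoG finG] that r1 by (auto simp: Z_def)
      have "int (\<Sum>p\<in>Z. nat (zorder G p)) = (\<Sum>p\<in>Z. int (nat (zorder G p)))"
        by (rule of_nat_sum)
      also have "\<dots> = (\<Sum>p\<in>Z. zorder G p)" using nn by (intro sum.cong) auto
      also have "\<dots> = int d" by (rule S1)
      finally have "(\<Sum>p\<in>Z. nat (zorder G p)) = d" by (simp only: of_nat_eq_iff)
      thus "let F = res_det N M U (perturbed_lengths l eps);
                   Z = {k \<in> ball k0 r. F k = 0}
               in finite Z \<and> (\<Sum>k\<in>Z. nat (zorder F k)) = d"
        using finZ unfolding Let_def G_def[symmetric] Z_def[symmetric] by simp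
    qed
  qed
qed

end
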